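(* Let $R$ be a commutative ring, $n\ge 1$, and suppose $\varphi=(1\perp\varepsilon)^t\,\psi_n\,(1\perp\varepsilon)$ for some $\varepsilon\in{\rm E}_{2n-1}(R)$. Then ${\rm E}_\varphi(R)={\rm E}_{2n-1}(R)$.
   Context: All rings are commutative with identity. ${\rm E}_m(R)$ is the subgroup of ${\rm SL}_m(R)$ generated by elementary matrices $I_m+\lambda e_{ij}$ ($i\neq j$, $\lambda\in R$). $\psi_n=\sum_{i=1}^n e_{2i-1,2i}-\sum_{i=1}^n e_{2i,2i-1}$ is the standard $2n\times2n$ symplectic matrix. $1\perp\varepsilon$ denotes $\begin{pmatrix}1&0\\0&\varepsilon\end{pmatrix}$. Elements of $R^m$ are row vectors, ${}^t$ is transpose. For an invertible alternating (i.e. of the form $\nu-\nu^t$) $2n\times2n$ matrix $\varphi$ write $\varphi=\begin{pmatrix}0&-c\\ c^t&\nu\end{pmatrix}$, $\varphi^{-1}=\begin{pmatrix}0&d\\ -d^t&\mu\end{pmatrix}$ with $c,d\in R^{2n-1}$, and set $\alpha_\varphi(v)=I_{2n-1}+d^tv\nu$, $\beta_\varphi(v)=I_{2n-1}+\mu v^tc$ for $v\in R^{2n-1}$. ${\rm E}_\varphi(R)$ is the subgroup of ${\rm GL}_{2n-1}(R)$ generated by all $\alpha_\varphi(v),\beta_\varphi(v)$. *)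

theory Defs
  imports "Jordan_Normal_Form.Matrix"
begin

text \<open>Matrices are JNF matrices; indices are 0-based. Row vectors in R^k are elements
 of carrier_vec k; the outer product x^t y is the k x k matrix with entries x_i y_j.\<close>

definition elem_mat :: "nat \<Rightarrow> nat \<Rightarrow> nat \<Rightarrow> 'a::comm_ring_1 \<Rightarrow> 'a mat" where
  "elem_mat m i j l = mat m m (\<lambda>(r,c). (if r = c then 1 else 0) + (if r = i \<and> c = j then l else 0))"

inductive_set gen_subgroup :: "nat \<Rightarrow> 'a::comm_ring_1 mat set \<Rightarrow> 'a mat set"
  for m :: nat and S :: "'a mat set" where
  gen_one: "1\<^sub>m m \<in> gen_subgroup m S"
| gen_gen: "A \<in> S \<Longrightarrow> A \<in> gen_subgroup m S"
| gen_mult: "A \<in> gen_subgroup m S \<Longrightarrow> B \<in> gen_subgroup m S \<Longrightarrow> A * B \<in> gen_subgroup m S"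
| gen_inv: "A \<in> gen_subgroup m S \<Longrightarrow> B \<in> carrier_mat m m \<Longrightarrow> A * B = 1\<^sub>m m \<Longrightarrow> B * A = 1\<^sub>m m
            \<Longrightarrow> B \<in> gen_subgroup m S"

definition E_group :: "nat \<Rightarrow> 'a::comm_ring_1 mat set" where
  "E_group m = gen_subgroup m {elem_mat m i j l | i j l. i < m \<and> j < m \<and> i \<noteq> j}"

definition psi :: "nat \<Rightarrow> 'a::comm_ring_1 mat" where
  "psi n = mat (2*n) (2*n) (\<lambda>(r,c). if even r \<and> c = r + 1 then 1
                                   else if odd r \<and> r = c + 1 then -1 else 0)"

definition one_perp :: "'a::comm_ring_1 mat \<Rightarrow> 'a mat" where
  "one_perp e = four_block_mat (1\<^sub>m 1) (0\<^sub>m 1 (dim_col e)) (0\<^sub>m (dim_row e) 1) e"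

definition mat_inverse :: "'a::comm_ring_1 mat \<Rightarrow> 'a mat" where
  "mat_inverse A = (SOME B. B \<in> carrier_mat (dim_row A) (dim_row A) \<and>
                          A * B = 1\<^sub>m (dim_row A) \<and> B * A = 1\<^sub>m (dim_row A))"

definition outer :: "'a::comm_ring_1 vec \<Rightarrow> 'a vec \<Rightarrow> 'a mat" where
  "outer x y = mat (dim_vec x) (dim_vec y) (\<lambda>(i,j). x $ i * y $ j)"

text \<open>Blocks of phi = [[0,-c],[c^t,nu]] and phi^{-1} = [[0,d],[-d^t,mu]] (phi is 2n x 2n).\<close>
definition phi_c :: "'a::comm_ring_1 mat \<Rightarrow> 'a vec" where
  "phi_c phi = vec (dim_row phi - 1) (\<lambda>j. - phi $$ (0, j+1))"
definition phi_nu :: "'a::comm_ring_1 mat \<Rightarrow> 'a mat" where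
  "phi_nu phi = mat (dim_row phi - 1) (dim_row phi - 1) (\<lambda>(i,j). phi $$ (i+1, j+1))"
definition phi_d :: "'a::comm_ring_1 mat \<Rightarrow> 'a vec" where
  "phi_d phi = vec (dim_row phi - 1) (\<lambda>j. mat_inverse phi $$ (0, j+1))"
definition phi_mu :: "'a::comm_ring_1 mat \<Rightarrow> 'a mat" where
  "phi_mu phi = mat (dim_row phi - 1) (dim_row phi - 1) (\<lambda>(i,j). mat_inverse phi $$ (i+1, j+1))"

definition alpha :: "'a::comm_ring_1 mat \<Rightarrow> 'a vec \<Rightarrow> 'a mat" where
  "alpha phi v = 1\<^sub>m (dim_row phi - 1) + outer (phi_d phi) v * phi_nu phi"
definition beta :: "'a::comm_ring_1 mat \<Rightarrow> 'a vec \<Rightarrow> 'a mat" where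
  "beta phi v = 1\<^sub>m (dim_row phi - 1) + phi_mu phi * outer v (phi_c phi)"

definition E_phi :: "'a::comm_ring_1 mat \<Rightarrow> 'a mat set" where
  "E_phi phi = gen_subgroup (dim_row phi - 1)
     ({alpha phi v | v. v \<in> carrier_vec (dim_row phi - 1)} \<union>
      {beta phi v | v. v \<in> carrier_vec (dim_row phi - 1)})"

end

theory Submission
  imports Defs
begin

lemma elem_carrier[simp]: "elem_mat m i j l \<in> carrier_mat m m"
  unfolding elem_mat_def by auto
lemma elem_index: "a < m \<Longrightarrow> b < m \<Longrightarrow> elem_mat m i j l $$ (a,b) = (if a = b then 1 else 0) + (if a = i \<and> b = j then l else 0)"
  unfolding elem_mat_def by auto
lemma elem_dims[simp]: "dim_row (elem_mat m i j l) = m" "dim_col (elem_mat m i j l) = m"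
  unfolding elem_mat_def by auto

lemma mult_index_sum:
  assumes "A \<in> carrier_mat nr k" "B \<in> carrier_mat k nc" "a < nr" "b < nc"
  shows "(A * B) $$ (a,b) = (\<Sum>t<k. A $$ (a,t) * B $$ (t,b))"
  using assms by (auto simp: scalar_prod_def lessThan_atLeast0 intro!: sum.cong)

lemma mult_elem_right:
  assumes A: "A \<in> carrier_mat m m" and ij: "i < m" "j < m" and ab: "a < m" "b < m"
  shows "(A * elem_mat m i j l) $$ (a,b) = A $$ (a,b) + (if b = j then A $$ (a,i) * l else 0)"
proof -
  have "(A * elem_mat m i j l) $$ (a,b) = (\<Sum>k<m. A $$ (a,k) * ((if k = b then 1 else 0) + (if k = i \<and> b = j then l else 0)))"
    unfolding mult_index_sum[OF A elem_carrier ab] by (rule sum.cong, auto simp: elem_index ab)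
  also have "\<dots> = (\<Sum>k<m. (if k = b then A $$ (a,k) else 0)) + (\<Sum>k<m. (if k = i then (if b = j then A $$ (a,k) * l else 0) else 0))"
    unfolding sum.distrib[symmetric] by (rule sum.cong, auto simp: distrib_left)
  also have "\<dots> = A $$ (a,b) + (if b = j then A $$ (a,i) * l else 0)"
    using ab ij by (simp add: sum.delta distrib_left)
  finally show ?thesis .
qed

lemma gen_carrier:
  assumes "S \<subseteq> carrier_mat m m" "A \<in> gen_subgroup m S" shows "A \<in> carrier_mat m m"
  using assms(2) by (induction rule: gen_subgroup.induct) (use assms(1) in auto)

lemma gen_mono:
  assumes "S \<subseteq> gen_subgroup m T" "A \<in> gen_subgroup m S" shows "A \<in> gen_subgroup m T"
  using assms(2)
proof (induction rule: gen_subgroup.induct)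
  case gen_one then show ?case by (rule gen_subgroup.gen_one)
next
  case (gen_gen A) then show ?case using assms(1) by auto
next
  case (gen_mult A B) then show ?case by (simp add: gen_subgroup.gen_mult)
next
  case (gen_inv A B) then show ?case using gen_subgroup.gen_inv by blast
qed

lemma gen_conj:
  assumes P: "P \<in> carrier_mat m m" and Q: "Q \<in> carrier_mat m m"
    and QP: "Q * P = 1\<^sub>m m" and PQ: "P * Q = 1\<^sub>m m"
    and S: "S \<subseteq> carrier_mat m m"
    and gens: "\<And>X. X \<in> S \<Longrightarrow> Q * X * P \<in> gen_subgroup m T"
    and A: "A \<in> gen_subgroup m S"
  shows "Q * A * P \<in> gen_subgroup m T"
  using A
proof (induction rule: gen_subgroup.induct)
  case gen_one
  then show ?case using Q P QP by (simp add: gen_subgroup.gen_one)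
next
  case (gen_gen A) then show ?case using gens by auto
next
  case (gen_mult A B)
  have A: "A \<in> carrier_mat m m" and B: "B \<in> carrier_mat m m"
    using gen_carrier[OF S] gen_mult.hyps by auto
  have "Q * (A * B) * P = (Q * A * P) * (Q * B * P)"
  proof -
    have "(Q * A * P) * (Q * B * P) = Q * A * (P * Q) * B * P"
      using A B P Q by (simp add: assoc_mult_mat[of _ m m _ m _ m])
    also have "\<dots> = Q * (A * B) * P" using A B P Q PQ by (simp add: assoc_mult_mat[of _ m m _ m _ m])
    finally show ?thesis by simp
  qed
  then show ?case using gen_mult.IH by (simp add: gen_subgroup.gen_mult)
next
  case (gen_inv A B)
  have A: "A \<in> carrier_mat m m" using gen_carrier[OF S] gen_inv.hyps by auto
  note B = gen_inv.hyps(2)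
  have "(Q * A * P) * (Q * B * P) = Q * (A * (P * Q) * B) * P"
    using A B P Q by (simp add: assoc_mult_mat[of _ m m _ m _ m])
  also have "\<dots> = 1\<^sub>m m" using A B P Q PQ QP gen_inv.hyps(3) by simp
  finally have 1: "(Q * A * P) * (Q * B * P) = 1\<^sub>m m" .
  have "(Q * B * P) * (Q * A * P) = Q * (B * (P * Q) * A) * P"
    using A B P Q by (simp add: assoc_mult_mat[of _ m m _ m _ m])
  also have "\<dots> = 1\<^sub>m m" using A B P Q PQ QP gen_inv.hyps(4) by simp
  finally have 2: "(Q * B * P) * (Q * A * P) = 1\<^sub>m m" .
  show ?case by (rule gen_subgroup.gen_inv[OF gen_inv.IH _ 1 2], use B P Q in auto)
qed

lemma E_carrier: "A \<in> E_group m \<Longrightarrow> A \<in> carrier_mat m m"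
  unfolding E_group_def by (rule gen_carrier) auto

lemma elem_in_E: "i < m \<Longrightarrow> j < m \<Longrightarrow> i \<noteq> j \<Longrightarrow> elem_mat m i j l \<in> E_group m"
  unfolding E_group_def by (rule gen_subgroup.gen_gen) auto

lemma E_mult: "A \<in> E_group m \<Longrightarrow> B \<in> E_group m \<Longrightarrow> A * B \<in> E_group m"
  unfolding E_group_def by (rule gen_subgroup.gen_mult)

lemma E_one: "1\<^sub>m m \<in> E_group m"
  unfolding E_group_def by (rule gen_subgroup.gen_one)

lemma elem_inv: "i < m \<Longrightarrow> j < m \<Longrightarrow> i \<noteq> j \<Longrightarrow> elem_mat m i j l * elem_mat m i j (-l) = 1\<^sub>m m"
proof (rule eq_matI)
  fix a b assume "i < m" "j < m" "i \<noteq> j" "a < dim_row (1\<^sub>m m :: 'a mat)" "b < dim_col (1\<^sub>m m :: 'a mat)"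
  then show "(elem_mat m i j l * elem_mat m i j (-l)) $$ (a,b) = (1\<^sub>m m :: 'a::comm_ring_1 mat) $$ (a,b)"
    by (subst mult_elem_right) (auto simp: elem_index)
qed auto

lemma E_inverse:
  assumes "A \<in> E_group m" shows "\<exists>B \<in> E_group m. A * B = 1\<^sub>m m \<and> B * A = 1\<^sub>m m"
  using assms unfolding E_group_def
proof (induction rule: gen_subgroup.induct)
  case gen_one then show ?case by (intro bexI[of _ "1\<^sub>m m"]) (auto intro: gen_subgroup.gen_one)
next
  case (gen_gen A)
  then obtain i j l where A: "A = elem_mat m i j l" "i < m" "j < m" "i \<noteq> j" by auto
  show ?case
    by (intro bexI[of _ "elem_mat m i j (-l)"]) (use A elem_inv[of i m j l] elem_inv[of i m j "-l"] in
      \<open>auto intro: gen_subgroup.gen_gen\<close>)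
next
  case (gen_mult A B)
  let ?S = "{elem_mat m i j l | i j l. i < m \<and> j < m \<and> i \<noteq> j}"
  have S: "?S \<subseteq> carrier_mat m m" by auto
  from gen_mult.IH obtain A' B' where A': "A' \<in> gen_subgroup m ?S" "A * A' = 1\<^sub>m m" "A' * A = 1\<^sub>m m"
    and B': "B' \<in> gen_subgroup m ?S" "B * B' = 1\<^sub>m m" "B' * B = 1\<^sub>m m" by blast
  have c: "A \<in> carrier_mat m m" "B \<in> carrier_mat m m" "A' \<in> carrier_mat m m" "B' \<in> carrier_mat m m"
    using gen_carrier[OF S] gen_mult.hyps A'(1) B'(1) by auto
  have "A * B * (B' * A') = A * (B * B') * A'" using c by (simp add: assoc_mult_mat[of _ m m _ m _ m])
  also have "\<dots> = 1\<^sub>m m" using c A' B' by simp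
  finally have 1: "A * B * (B' * A') = 1\<^sub>m m" .
  have "B' * A' * (A * B) = B' * (A' * A) * B" using c by (simp add: assoc_mult_mat[of _ m m _ m _ m])
  also have "\<dots> = 1\<^sub>m m" using c A' B' by simp
  finally have 2: "B' * A' * (A * B) = 1\<^sub>m m" .
  show ?case using 1 2 A'(1) B'(1) by (intro bexI[of _ "B' * A'"]) (auto intro: gen_subgroup.gen_mult)
next
  case (gen_inv A B)
  then show ?case by blast
qed

definition rowmat :: "nat \<Rightarrow> (nat \<Rightarrow> 'a::comm_ring_1) \<Rightarrow> nat \<Rightarrow> 'a mat" where
  "rowmat m f k = mat m m (\<lambda>(a,b). (if a = b then 1 else 0) + (if a = 0 \<and> 0 < b \<and> b < k then f b else 0))"
definition colmat :: "nat \<Rightarrow> (nat \<Rightarrow> 'a::comm_ring_1) \<Rightarrow> nat \<Rightarrow> 'a mat" where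
  "colmat m f k = mat m m (\<lambda>(a,b). (if a = b then 1 else 0) + (if b = 0 \<and> 0 < a \<and> a < k then f a else 0))"

lemma rowmat_carrier[simp]: "rowmat m f k \<in> carrier_mat m m" unfolding rowmat_def by auto
lemma colmat_carrier[simp]: "colmat m f k \<in> carrier_mat m m" unfolding colmat_def by auto
lemma rowcol_dims[simp]: "dim_row (rowmat m f k) = m" "dim_row (colmat m f k) = m" "dim_col (rowmat m f k) = m" "dim_col (colmat m f k) = m"
  unfolding rowmat_def colmat_def by auto

lemma rowmat_E: "rowmat m f k \<in> E_group m"
proof (induction k)
  case 0
  have "rowmat m f 0 = 1\<^sub>m m" unfolding rowmat_def by (rule eq_matI) auto
  then show ?case using E_one by simp
next
  case (Suc k)
  show ?case
  proof (cases "k = 0 \<or> m \<le> k")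
    case True
    then have "rowmat m f (Suc k) = rowmat m f k" unfolding rowmat_def by (intro eq_matI) auto
    then show ?thesis using Suc by simp
  next
    case False
    have "rowmat m f (Suc k) = rowmat m f k * elem_mat m 0 k (f k)"
    proof (rule eq_matI)
      fix a b assume "a < dim_row (rowmat m f k * elem_mat m 0 k (f k))" "b < dim_col (rowmat m f k * elem_mat m 0 k (f k))"
      then have ab: "a < m" "b < m" by auto
      show "rowmat m f (Suc k) $$ (a,b) = (rowmat m f k * elem_mat m 0 k (f k)) $$ (a,b)"
        by (subst mult_elem_right[OF rowmat_carrier]) (use ab False in \<open>auto simp: rowmat_def\<close>)
    qed auto
    then show ?thesis using Suc False E_mult elem_in_E[of 0 m k] by auto
  qed
qed

lemma colmat_E: "colmat m f k \<in> E_group m"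
proof (induction k)
  case 0
  have "colmat m f 0 = 1\<^sub>m m" unfolding colmat_def by (rule eq_matI) auto
  then show ?case using E_one by simp
next
  case (Suc k)
  show ?case
  proof (cases "k = 0 \<or> m \<le> k")
    case True
    then have "colmat m f (Suc k) = colmat m f k" unfolding colmat_def by (intro eq_matI) auto
    then show ?thesis using Suc by simp
  next
    case False
    have "colmat m f (Suc k) = colmat m f k * elem_mat m k 0 (f k)"
    proof (rule eq_matI)
      fix a b assume "a < dim_row (colmat m f k * elem_mat m k 0 (f k))" "b < dim_col (colmat m f k * elem_mat m k 0 (f k))"
      then have ab: "a < m" "b < m" by auto
      show "colmat m f (Suc k) $$ (a,b) = (colmat m f k * elem_mat m k 0 (f k)) $$ (a,b)"
        by (subst mult_elem_right[OF colmat_carrier]) (use ab False in \<open>auto simp: colmat_def less_Suc_eq\<close>)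
    qed auto
    then show ?thesis using Suc False E_mult elem_in_E[of k m 0] by auto
  qed
qed

definition rr :: "nat \<Rightarrow> 'a::comm_ring_1 mat" where
  "rr m = mat 1 m (\<lambda>(_,j). if j = 0 then 1 else 0)"

lemma rr_carrier[simp]: "rr m \<in> carrier_mat 1 m" unfolding rr_def by auto
lemma rr_dims[simp]: "dim_row (rr m) = 1" "dim_col (rr m) = m" unfolding rr_def by auto

lemma sum_delta_left: "(\<Sum>t<(m::nat). (if t = c then 1 else 0) * f t) = (if c < m then f c else (0::'a::comm_ring_1))"
proof -
  have "(\<Sum>t<m. (if t = c then 1 else 0) * f t) = (\<Sum>t<m. if t = c then f t else 0)"
    by (rule sum.cong) auto
  then show ?thesis by (simp add: sum.delta')
qed
lemma sum_delta_right: "(\<Sum>t<(m::nat). f t * (if t = c then 1 else 0)) = (if c < m then f c else (0::'a::comm_ring_1))"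
proof -
  have "(\<Sum>t<m. f t * (if t = c then 1 else 0)) = (\<Sum>t<m. if t = c then f t else 0)"
    by (rule sum.cong) auto
  then show ?thesis by (simp add: sum.delta')
qed

lemma rowop_E:
  assumes W: "W \<in> carrier_mat 1 m" and W0: "W $$ (0,0) = 0"
  shows "1\<^sub>m m + transpose_mat (rr m) * W \<in> E_group m"
proof -
  have "1\<^sub>m m + transpose_mat (rr m) * W = rowmat m (\<lambda>b. W $$ (0,b)) m"
  proof (rule eq_matI)
    fix a b assume ab: "a < dim_row (rowmat m (\<lambda>b. W $$ (0,b)) m)" "b < dim_col (rowmat m (\<lambda>b. W $$ (0,b)) m)"
    then have ab: "a < m" "b < m" by (auto simp: rowmat_def)
    have e: "(transpose_mat (rr m) * W) $$ (a,b) = (if a = 0 then W $$ (0,b) else 0)"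
      unfolding mult_index_sum[OF transpose_carrier_mat[THEN iffD2, OF rr_carrier] W ab] using W ab by (simp add: rr_def)
    then show "(1\<^sub>m m + transpose_mat (rr m) * W) $$ (a,b) = rowmat m (\<lambda>b. W $$ (0,b)) m $$ (a,b)"
      using ab W W0 by (subst index_add_mat) (auto simp: rowmat_def e)
  qed (use W in \<open>auto simp: rowmat_def\<close>)
  then show ?thesis using rowmat_E by metis
qed

lemma colop_E:
  assumes U: "U \<in> carrier_mat m 1" and U0: "U $$ (0,0) = 0"
  shows "1\<^sub>m m + U * rr m \<in> E_group m"
proof -
  have "1\<^sub>m m + U * rr m = colmat m (\<lambda>a. U $$ (a,0)) m"
  proof (rule eq_matI)
    fix a b assume ab: "a < dim_row (colmat m (\<lambda>a. U $$ (a,0)) m)" "b < dim_col (colmat m (\<lambda>a. U $$ (a,0)) m)"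
    then have ab: "a < m" "b < m" by (auto simp: colmat_def)
    have e: "(U * rr m) $$ (a,b) = (if b = 0 then U $$ (a,0) else 0)"
      unfolding mult_index_sum[OF U rr_carrier ab] using U ab by (simp add: rr_def)
    then show "(1\<^sub>m m + U * rr m) $$ (a,b) = colmat m (\<lambda>a. U $$ (a,0)) m $$ (a,b)"
      using ab U U0 by (subst index_add_mat) (auto simp: colmat_def e)
  qed (use U in \<open>auto simp: colmat_def\<close>)
  then show ?thesis using colmat_E by metis
qed

definition psip :: "nat \<Rightarrow> 'a::comm_ring_1 mat" where
  "psip n = mat (2*n-1) (2*n-1) (\<lambda>(i,j). psi n $$ (i+1, j+1))"

lemma psip_carrier[simp]: "psip n \<in> carrier_mat (2*n-1) (2*n-1)" unfolding psip_def by auto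
lemma psip_dims[simp]: "dim_row (psip n) = 2*n-1" "dim_col (psip n) = 2*n-1" unfolding psip_def by auto
lemma psi_carrier[simp]: "psi n \<in> carrier_mat (2*n) (2*n)" unfolding psi_def by auto
lemma psi_dims[simp]: "dim_row (psi n) = 2*n" "dim_col (psi n) = 2*n" unfolding psi_def by auto

lemma psip_index: "i < 2*n-1 \<Longrightarrow> j < 2*n-1 \<Longrightarrow>
  psip n $$ (i,j) = (if odd i \<and> j = i+1 then 1 else if even i \<and> i = j+1 then -1 else (0::'a::comm_ring_1))"
  unfolding psip_def psi_def by auto

lemma odd_succ_lt: "odd (a::nat) \<Longrightarrow> a < 2*n-1 \<Longrightarrow> a + 1 < 2*n-1"
  by (elim oddE) presburger

lemma psip_sum_left:
  assumes a: "a < 2*n-1"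
  shows "(\<Sum>t<2*n-1. psip n $$ (a,t) * X t) = (if odd a then X (a+1) else if a = 0 then 0 else - X (a-1))"
proof (cases "odd a")
  case True
  have "(\<Sum>t<2*n-1. psip n $$ (a,t) * X t) = (\<Sum>t<2*n-1. if t = a+1 then X t else 0)"
    by (rule sum.cong) (use a True in \<open>auto simp: psip_index\<close>)
  then show ?thesis using True odd_succ_lt[OF True a] by (simp add: sum.delta')
next
  case False
  show ?thesis
  proof (cases "a = 0")
    case True
    have "(\<Sum>t<2*n-1. psip n $$ (a,t) * X t) = (\<Sum>t<2*n-1. 0)"
      by (rule sum.cong) (use a True in \<open>auto simp: psip_index\<close>)
    then show ?thesis using True by simp
  next
    case F2: False
    have "(\<Sum>t<2*n-1. psip n $$ (a,t) * X t) = (\<Sum>t<2*n-1. if t = a-1 then - X t else 0)"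
      by (rule sum.cong) (use a False F2 in \<open>auto simp: psip_index\<close>)
    then show ?thesis using False F2 a by (simp add: sum.delta')
  qed
qed

lemma psi_block:
  assumes n: "n \<ge> 1"
  shows "psi n = four_block_mat (0\<^sub>m 1 1) (rr (2*n-1)) (- transpose_mat (rr (2*n-1))) (psip n)"
proof (rule eq_matI)
  fix i j assume ij: "i < dim_row (four_block_mat (0\<^sub>m 1 1) (rr (2*n-1)) (- transpose_mat (rr (2*n-1))) (psip n) :: 'a mat)"
     "j < dim_col (four_block_mat (0\<^sub>m 1 1) (rr (2*n-1)) (- transpose_mat (rr (2*n-1))) (psip n) :: 'a mat)"
  then have ij': "i < 2*n" "j < 2*n" using n by auto
  show "psi n $$ (i,j) = four_block_mat (0\<^sub>m 1 1) (rr (2*n-1)) (- transpose_mat (rr (2*n-1))) (psip n) $$ (i,j)"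
    using ij ij' n by (auto simp: psi_def rr_def psip_def)
qed (use n in auto)

lemma rr_psip:
  assumes n: "n \<ge> 1"
  shows "rr (2*n-1) * psip n = (0\<^sub>m 1 (2*n-1) :: 'a::comm_ring_1 mat)"
proof (rule eq_matI)
  fix i j assume ij: "i < dim_row (0\<^sub>m 1 (2*n-1) :: 'a mat)" "j < dim_col (0\<^sub>m 1 (2*n-1) :: 'a mat)"
  then have "i = 0" "j < 2*n-1" by auto
  then show "(rr (2*n-1) * psip n) $$ (i,j) = (0\<^sub>m 1 (2*n-1) :: 'a mat) $$ (i,j)"
    using n by (subst mult_index_sum[OF rr_carrier psip_carrier]) (auto simp: rr_def sum_delta_left psip_index)
qed auto

lemma psip_rrT:
  assumes n: "n \<ge> 1"
  shows "psip n * transpose_mat (rr (2*n-1)) = (0\<^sub>m (2*n-1) 1 :: 'a::comm_ring_1 mat)"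
proof (rule eq_matI)
  fix i j assume ij: "i < dim_row (0\<^sub>m (2*n-1) 1 :: 'a mat)" "j < dim_col (0\<^sub>m (2*n-1) 1 :: 'a mat)"
  then have "j = 0" "i < 2*n-1" by auto
  then show "(psip n * transpose_mat (rr (2*n-1))) $$ (i,j) = (0\<^sub>m (2*n-1) 1 :: 'a mat) $$ (i,j)"
    using n by (subst mult_index_sum[OF psip_carrier transpose_carrier_mat[THEN iffD2, OF rr_carrier]])
       (auto simp: rr_def sum_delta_right psip_index)
qed auto

lemma rr_rrT:
  assumes m: "m > 0"
  shows "rr m * transpose_mat (rr m) = (1\<^sub>m 1 :: 'a::comm_ring_1 mat)"
proof (rule eq_matI)
  fix i j assume ij: "i < dim_row (1\<^sub>m 1 :: 'a mat)" "j < dim_col (1\<^sub>m 1 :: 'a mat)"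
  then have "i = 0" "j = 0" by auto
  then show "(rr m * transpose_mat (rr m)) $$ (i,j) = (1\<^sub>m 1 :: 'a mat) $$ (i,j)"
    using m by (subst mult_index_sum[OF rr_carrier transpose_carrier_mat[THEN iffD2, OF rr_carrier]])
       (auto simp: rr_def sum_delta_right)
qed auto

lemma psip_sq:
  assumes n: "n \<ge> 1"
  shows "psip n * psip n = transpose_mat (rr (2*n-1)) * rr (2*n-1) - (1\<^sub>m (2*n-1) :: 'a::comm_ring_1 mat)"
proof (rule eq_matI)
  fix i j assume ij: "i < dim_row (transpose_mat (rr (2*n-1)) * rr (2*n-1) - (1\<^sub>m (2*n-1) :: 'a mat))"
    "j < dim_col (transpose_mat (rr (2*n-1)) * rr (2*n-1) - (1\<^sub>m (2*n-1) :: 'a mat))"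
  then have ij: "i < 2*n-1" "j < 2*n-1" by auto
  have r: "(transpose_mat (rr (2*n-1)) * rr (2*n-1)) $$ (i,j) = (if i = 0 \<and> j = 0 then 1 else (0::'a))"
    using ij by (subst mult_index_sum[OF transpose_carrier_mat[THEN iffD2, OF rr_carrier] rr_carrier]) (auto simp: rr_def)
  have l: "(psip n * psip n) $$ (i,j) = (if i = j \<and> i \<noteq> 0 then -1 else (0::'a))"
  proof -
    have "(psip n * psip n) $$ (i,j) = (\<Sum>t<2*n-1. psip n $$ (i,t) * psip n $$ (t,j))"
      by (rule mult_index_sum) (use ij in auto)
    also have "\<dots> = (if odd i then psip n $$ (i+1,j) else if i = 0 then 0 else - psip n $$ (i-1,j))"
      by (rule psip_sum_left[OF ij(1)])
    also have "\<dots> = (if i = j \<and> i \<noteq> 0 then -1 else (0::'a))"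
      using ij odd_succ_lt[of i n] by (auto simp: psip_index)
    finally show ?thesis .
  qed
  show "(psip n * psip n) $$ (i,j) = (transpose_mat (rr (2*n-1)) * rr (2*n-1) - (1\<^sub>m (2*n-1) :: 'a mat)) $$ (i,j)"
  proof -
    have "(transpose_mat (rr (2*n-1)) * rr (2*n-1) - (1\<^sub>m (2*n-1) :: 'a mat)) $$ (i,j)
      = (transpose_mat (rr (2*n-1)) * rr (2*n-1)) $$ (i,j) - (1\<^sub>m (2*n-1) :: 'a mat) $$ (i,j)"
      by (rule index_minus_mat) (use ij in auto)
    then show ?thesis unfolding l r using ij by auto
  qed
qed auto

lemma op_eq: "X \<in> carrier_mat m m \<Longrightarrow> one_perp X = four_block_mat (1\<^sub>m 1) (0\<^sub>m 1 m) (0\<^sub>m m 1) X"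
  unfolding one_perp_def by auto
lemma rr_carrier'[simp]: "rr m \<in> carrier_mat (Suc 0) m" unfolding rr_def by auto
lemma op_carrier[simp]: assumes X: "X \<in> carrier_mat m m" shows "one_perp X \<in> carrier_mat (1+m) (1+m)"
  unfolding op_eq[OF X] by (rule four_block_carrier_mat[OF one_carrier_mat X])
lemma op_mult: assumes A: "A \<in> carrier_mat m m" and B: "B \<in> carrier_mat m m" shows "one_perp A * one_perp B = one_perp (A * B)"
  unfolding op_eq[OF A] op_eq[OF B] op_eq[OF mult_carrier_mat[OF A B]]
  by (subst mult_four_block_mat[of _ 1 1 _ m _ m _ _ 1 _ m]) (use A B in auto)
lemma op_one: "one_perp (1\<^sub>m m) = 1\<^sub>m (1+m)"
  unfolding op_eq[OF one_carrier_mat] by simp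
lemma op_transpose: assumes X: "X \<in> carrier_mat m m" shows "transpose_mat (one_perp X) = one_perp (transpose_mat X)"
  unfolding op_eq[OF X] op_eq[OF transpose_carrier_mat[THEN iffD2, OF X]]
  by (subst transpose_four_block_mat[of _ 1 1 _ m _ m]) (use X in auto)

lemma uminus_zero_mat'[simp]: "- (0\<^sub>m a b :: 'a::group_add mat) = 0\<^sub>m a b"
  by (rule eq_matI) auto

lemma phi_block:
  assumes n: "n \<ge> 1" and X: "X \<in> carrier_mat (2*n-1) (2*n-1)"
  shows "transpose_mat (one_perp X) * psi n * one_perp X =
     four_block_mat (0\<^sub>m 1 1) (rr (2*n-1) * X) (- (transpose_mat X * transpose_mat (rr (2*n-1))))
        (transpose_mat X * psip n * X)"
proof -
  define m where "m = 2*n-1"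
  have XT: "transpose_mat X \<in> carrier_mat m m" using X by (simp add: m_def)
  have X': "X \<in> carrier_mat m m" using X by (simp add: m_def)
  have rT: "transpose_mat (rr m) \<in> carrier_mat m 1" by simp
  have r: "rr m \<in> carrier_mat 1 m" by simp
  have ps: "psip n \<in> carrier_mat m m" unfolding m_def by (rule psip_carrier)
  have s1: "transpose_mat (one_perp X) * psi n = four_block_mat (0\<^sub>m 1 1) (rr m) (- (transpose_mat X * transpose_mat (rr m))) (transpose_mat X * psip n)"
  proof -
    have "transpose_mat (one_perp X) * psi n = four_block_mat (1\<^sub>m 1) (0\<^sub>m 1 m) (0\<^sub>m m 1) (transpose_mat X) *
       four_block_mat (0\<^sub>m 1 1) (rr m) (- transpose_mat (rr m)) (psip n)"
      unfolding op_transpose[OF X'] op_eq[OF XT] psi_block[OF n] m_def ..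
    also have "\<dots> = four_block_mat (1\<^sub>m 1 * 0\<^sub>m 1 1 + 0\<^sub>m 1 m * (- transpose_mat (rr m)))
        (1\<^sub>m 1 * rr m + 0\<^sub>m 1 m * psip n)
        (0\<^sub>m m 1 * 0\<^sub>m 1 1 + transpose_mat X * (- transpose_mat (rr m)))
        (0\<^sub>m m 1 * rr m + transpose_mat X * psip n)"
      by (rule mult_four_block_mat[OF one_carrier_mat zero_carrier_mat zero_carrier_mat XT
         zero_carrier_mat r uminus_carrier_mat[OF rT] ps])
    also have "\<dots> = four_block_mat (0\<^sub>m 1 1) (rr m) (- (transpose_mat X * transpose_mat (rr m))) (transpose_mat X * psip n)"
    proof (rule cong_four_block_mat)
      show "1\<^sub>m 1 * 0\<^sub>m 1 1 + 0\<^sub>m 1 m * (- transpose_mat (rr m)) = (0\<^sub>m 1 1 :: 'a mat)" by simp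
      show "1\<^sub>m 1 * rr m + 0\<^sub>m 1 m * psip n = rr m" unfolding left_mult_zero_mat[OF ps] using r by simp
      show "0\<^sub>m m 1 * 0\<^sub>m 1 1 + transpose_mat X * (- transpose_mat (rr m)) = - (transpose_mat X * transpose_mat (rr m))"
        using XT rT by simp
      show "0\<^sub>m m 1 * rr m + transpose_mat X * psip n = transpose_mat X * psip n" using mult_carrier_mat[OF XT ps] by simp
    qed
    finally show ?thesis unfolding m_def .
  qed
  have B: "transpose_mat X * psip n \<in> carrier_mat m m" using mult_carrier_mat[OF XT ps] .
  have C: "- (transpose_mat X * transpose_mat (rr m)) \<in> carrier_mat m 1" using mult_carrier_mat[OF XT rT] by simp
  have "four_block_mat (0\<^sub>m 1 1) (rr m) (- (transpose_mat X * transpose_mat (rr m))) (transpose_mat X * psip n) * one_perp X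
     = four_block_mat (0\<^sub>m 1 1 * 1\<^sub>m 1 + rr m * 0\<^sub>m m 1) (0\<^sub>m 1 1 * 0\<^sub>m 1 m + rr m * X)
        ((- (transpose_mat X * transpose_mat (rr m))) * 1\<^sub>m 1 + (transpose_mat X * psip n) * 0\<^sub>m m 1)
        ((- (transpose_mat X * transpose_mat (rr m))) * 0\<^sub>m 1 m + (transpose_mat X * psip n) * X)"
    unfolding op_eq[OF X']
    by (rule mult_four_block_mat[OF zero_carrier_mat r C B one_carrier_mat zero_carrier_mat zero_carrier_mat X'])
  also have "\<dots> = four_block_mat (0\<^sub>m 1 1) (rr m * X) (- (transpose_mat X * transpose_mat (rr m))) (transpose_mat X * psip n * X)"
  proof (rule cong_four_block_mat)
    show "0\<^sub>m 1 1 * 1\<^sub>m 1 + rr m * 0\<^sub>m m 1 = (0\<^sub>m 1 1 :: 'a mat)" using r by simp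
    show "0\<^sub>m 1 1 * 0\<^sub>m 1 m + rr m * X = rr m * X" using mult_carrier_mat[OF r X'] by simp
    show "(- (transpose_mat X * transpose_mat (rr m))) * 1\<^sub>m 1 + (transpose_mat X * psip n) * 0\<^sub>m m 1 = - (transpose_mat X * transpose_mat (rr m))"
      unfolding right_mult_zero_mat[OF B] using C by simp
    show "(- (transpose_mat X * transpose_mat (rr m))) * 0\<^sub>m 1 m + (transpose_mat X * psip n) * X = transpose_mat X * psip n * X"
      using C B X' mult_carrier_mat[OF B X'] by simp
  qed
  finally show ?thesis unfolding s1 m_def .
qed

lemma alg_alpha:
  fixes epsi eps Ps r V :: "'a::comm_ring_1 mat"
  assumes c: "epsi \<in> carrier_mat m m" "eps \<in> carrier_mat m m" "Ps \<in> carrier_mat m m"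
    "r \<in> carrier_mat 1 m" "V \<in> carrier_mat 1 m" and ie: "epsi * eps = 1\<^sub>m m"
  shows "1\<^sub>m m + (- (epsi * transpose_mat r * V)) * (transpose_mat eps * Ps * eps)
       = epsi * (1\<^sub>m m + transpose_mat r * (- (V * transpose_mat eps * Ps))) * eps"
proof -
  have rT: "transpose_mat r \<in> carrier_mat m 1" using c by simp
  have eT: "transpose_mat eps \<in> carrier_mat m m" using c by simp
  have W: "V * transpose_mat eps * Ps \<in> carrier_mat 1 m" using c eT by (metis mult_carrier_mat)
  have rW: "transpose_mat r * (V * transpose_mat eps * Ps) \<in> carrier_mat m m" using rT W by (metis mult_carrier_mat)
  have "epsi * (1\<^sub>m m + transpose_mat r * (- (V * transpose_mat eps * Ps))) * eps
      = (epsi * 1\<^sub>m m + epsi * (transpose_mat r * (- (V * transpose_mat eps * Ps)))) * eps"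
    by (subst mult_add_distrib_mat[of _ m m]) (use c rT W in auto)
  also have "\<dots> = epsi * eps + epsi * (transpose_mat r * (- (V * transpose_mat eps * Ps))) * eps"
    by (subst add_mult_distrib_mat[of _ m m]) (use c rT W rW in auto)
  also have "epsi * (transpose_mat r * (- (V * transpose_mat eps * Ps))) * eps
     = (- (epsi * transpose_mat r * V)) * (transpose_mat eps * Ps * eps)"
  proof -
    have f1: "transpose_mat eps * Ps \<in> carrier_mat m m" "Ps * eps \<in> carrier_mat m m" using c eT by auto
    have f2: "V * (transpose_mat eps * Ps) \<in> carrier_mat 1 m" "transpose_mat eps * (Ps * eps) \<in> carrier_mat m m"
      using c f1 eT by (metis mult_carrier_mat)+
    have f3: "transpose_mat r * (V * (transpose_mat eps * Ps)) \<in> carrier_mat m m" "transpose_mat r * V \<in> carrier_mat m m"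
      "V * (transpose_mat eps * (Ps * eps)) \<in> carrier_mat 1 m"
      using c f2 rT by (metis mult_carrier_mat)+
    have e1: "epsi * (transpose_mat r*(V*(transpose_mat eps*Ps))) * eps = epsi * (transpose_mat r*(V*(transpose_mat eps*Ps)) * eps)"
      by (rule assoc_mult_mat[OF c(1) f3(1) c(2)])
    have e2: "transpose_mat r*(V*(transpose_mat eps*Ps))*eps = transpose_mat r*(V*(transpose_mat eps*Ps)*eps)"
      by (rule assoc_mult_mat[OF rT f2(1) c(2)])
    have e3: "V*(transpose_mat eps*Ps)*eps = V*(transpose_mat eps*Ps*eps)" by (rule assoc_mult_mat[OF c(5) f1(1) c(2)])
    have e4: "transpose_mat eps*Ps*eps = transpose_mat eps*(Ps*eps)" by (rule assoc_mult_mat[OF eT c(3) c(2)])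
    have e5: "epsi*(transpose_mat r*V)*(transpose_mat eps*(Ps*eps)) = epsi*(transpose_mat r*V*(transpose_mat eps*(Ps*eps)))"
      by (rule assoc_mult_mat[OF c(1) f3(2) f2(2)])
    have e6: "transpose_mat r*V*(transpose_mat eps*(Ps*eps)) = transpose_mat r*(V*(transpose_mat eps*(Ps*eps)))"
      by (rule assoc_mult_mat[OF rT c(5) f2(2)])
    have e7: "epsi * transpose_mat r * V = epsi * (transpose_mat r * V)" by (rule assoc_mult_mat[OF c(1) rT c(5)])
    have e8: "V * transpose_mat eps * Ps = V * (transpose_mat eps * Ps)" by (rule assoc_mult_mat[OF c(5) eT c(3)])
    show ?thesis using c rT W eT f1 f2 f3 unfolding e7 e8 by (simp add: e1 e2 e3 e4 e5 e6)
  qed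
  finally show ?thesis using ie by simp
qed

lemma zero_minus_mat': "A \<in> carrier_mat nr nc \<Longrightarrow> 0\<^sub>m nr nc - A = - (A :: 'a::ring mat)"
  by (rule eq_matI) auto

lemma uminus_mult_both: "A \<in> carrier_mat a b \<Longrightarrow> B \<in> carrier_mat b c \<Longrightarrow> (- A) * (- B) = A * (B :: 'a::comm_ring_1 mat)"
  by (rule eq_matI) (auto simp: scalar_prod_def)

lemma alg_beta:
  fixes epsi eps Ps r Cv :: "'a::comm_ring_1 mat"
  assumes c: "epsi \<in> carrier_mat m m" "eps \<in> carrier_mat m m" "Ps \<in> carrier_mat m m"
    "r \<in> carrier_mat 1 m" "Cv \<in> carrier_mat m 1" and ie: "epsi * eps = 1\<^sub>m m"
  shows "1\<^sub>m m + (- (epsi * Ps * transpose_mat epsi)) * (- (Cv * (r * eps)))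
       = epsi * (1\<^sub>m m + (Ps * transpose_mat epsi * Cv) * r) * eps"
proof -
  have iT: "transpose_mat epsi \<in> carrier_mat m m" using c by simp
  have f1: "Ps * transpose_mat epsi \<in> carrier_mat m m" "r * eps \<in> carrier_mat 1 m" using c iT by (metis mult_carrier_mat)+
  have f2: "Ps * transpose_mat epsi * Cv \<in> carrier_mat m 1" "Cv * (r * eps) \<in> carrier_mat m m"
    using c f1 by (metis mult_carrier_mat)+
  have f3: "Ps * transpose_mat epsi * Cv * r \<in> carrier_mat m m" using c f2 by (metis mult_carrier_mat)
  have f4: "epsi * Ps \<in> carrier_mat m m" using c by (metis mult_carrier_mat)
  have "epsi * (1\<^sub>m m + (Ps * transpose_mat epsi * Cv) * r) * eps
      = (epsi * 1\<^sub>m m + epsi * ((Ps * transpose_mat epsi * Cv) * r)) * eps"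
    by (subst mult_add_distrib_mat[of _ m m]) (use c f3 in auto)
  also have "\<dots> = epsi * eps + epsi * ((Ps * transpose_mat epsi * Cv) * r) * eps"
    by (subst add_mult_distrib_mat[of _ m m]) (use c f3 mult_carrier_mat[OF c(1) f3] in auto)
  also have "epsi * ((Ps * transpose_mat epsi * Cv) * r) * eps
     = (- (epsi * Ps * transpose_mat epsi)) * (- (Cv * (r * eps)))"
  proof -
    have e1: "epsi * (Ps * transpose_mat epsi * Cv * r) * eps = epsi * (Ps * transpose_mat epsi * Cv * r * eps)"
      by (rule assoc_mult_mat[OF c(1) f3 c(2)])
    have e2: "Ps * transpose_mat epsi * Cv * r * eps = Ps * transpose_mat epsi * Cv * (r * eps)"
      by (rule assoc_mult_mat[OF f2(1) c(4) c(2)])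
    have e3: "Ps * transpose_mat epsi * Cv * (r * eps) = Ps * transpose_mat epsi * (Cv * (r * eps))"
      by (rule assoc_mult_mat[OF f1(1) c(5) f1(2)])
    have e4: "epsi * (Ps * transpose_mat epsi * (Cv * (r * eps))) = epsi * (Ps * transpose_mat epsi) * (Cv * (r * eps))"
      by (rule assoc_mult_mat[OF c(1) f1(1) f2(2), symmetric])
    have e5: "epsi * (Ps * transpose_mat epsi) = epsi * Ps * transpose_mat epsi"
      by (rule assoc_mult_mat[OF c(1) c(3) iT, symmetric])
    have "(- (epsi * Ps * transpose_mat epsi)) * (- (Cv * (r * eps))) = (epsi * Ps * transpose_mat epsi) * (Cv * (r * eps))"
      by (rule uminus_mult_both[OF mult_carrier_mat[OF f4 iT] f2(2)])
    then show ?thesis unfolding e1 e2 e3 e4 e5 by simp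
  qed
  finally show ?thesis using ie by simp
qed

lemma transpose_inv:
  fixes eps epsi :: "'a::comm_ring_1 mat"
  assumes c: "epsi \<in> carrier_mat m m" "eps \<in> carrier_mat m m" and ie: "eps * epsi = 1\<^sub>m m"
  shows "transpose_mat epsi * transpose_mat eps = 1\<^sub>m m"
  using transpose_mult[OF c(2) c(1)] ie by simp

lemma alg_W:
  fixes epsi eps Ps r E1 :: "'a::comm_ring_1 mat"
  assumes c: "epsi \<in> carrier_mat m m" "eps \<in> carrier_mat m m" "Ps \<in> carrier_mat m m"
    "r \<in> carrier_mat 1 m" "E1 \<in> carrier_mat 1 m" and ie: "eps * epsi = 1\<^sub>m m"
    and Er: "E1 * transpose_mat r = 0\<^sub>m 1 1" and sq: "Ps * Ps = transpose_mat r * r - 1\<^sub>m m"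
  shows "- ((E1 * Ps * transpose_mat epsi) * transpose_mat eps * Ps) = E1"
proof -
  have iT: "transpose_mat epsi \<in> carrier_mat m m" and eT: "transpose_mat eps \<in> carrier_mat m m"
    and rT: "transpose_mat r \<in> carrier_mat m 1" using c by auto
  have f1: "E1 * Ps \<in> carrier_mat 1 m" using c by (metis mult_carrier_mat)
  have "(E1 * Ps * transpose_mat epsi) * transpose_mat eps * Ps = E1 * Ps * (transpose_mat epsi * transpose_mat eps) * Ps"
    using assoc_mult_mat[OF f1 iT eT] by simp
  also have "\<dots> = E1 * (Ps * Ps)" using transpose_inv[OF c(1) c(2) ie] f1 assoc_mult_mat[OF c(5) c(3) c(3)] right_mult_one_mat[OF f1] by simp
  also have "\<dots> = E1 * (transpose_mat r * r) - E1" unfolding sq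
    by (subst mult_minus_distrib_mat[of _ 1 m]) (use c rT in auto)
  also have "E1 * (transpose_mat r * r) = 0\<^sub>m 1 m"
    using assoc_mult_mat[OF c(5) rT c(4), symmetric] Er c by simp
  finally show ?thesis using c zero_minus_mat'[OF c(5)] by simp
qed

lemma alg_U:
  fixes epsi eps Ps r F :: "'a::comm_ring_1 mat"
  assumes c: "epsi \<in> carrier_mat m m" "eps \<in> carrier_mat m m" "Ps \<in> carrier_mat m m"
    "r \<in> carrier_mat 1 m" "F \<in> carrier_mat m 1" and ie: "eps * epsi = 1\<^sub>m m"
    and rF: "r * F = 0\<^sub>m 1 1" and sq: "Ps * Ps = transpose_mat r * r - 1\<^sub>m m"
  shows "Ps * transpose_mat epsi * (- (transpose_mat eps * Ps * F)) = F"
proof -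
  have iT: "transpose_mat epsi \<in> carrier_mat m m" and eT: "transpose_mat eps \<in> carrier_mat m m"
    and rT: "transpose_mat r \<in> carrier_mat m 1" using c by auto
  have f1: "Ps * F \<in> carrier_mat m 1" "Ps * transpose_mat epsi \<in> carrier_mat m m" using c iT by (metis mult_carrier_mat)+
  have "Ps * transpose_mat epsi * (transpose_mat eps * Ps * F) = Ps * (transpose_mat epsi * transpose_mat eps) * (Ps * F)"
    using assoc_mult_mat[OF f1(2) eT f1(1)] assoc_mult_mat[OF eT c(3) c(5)] assoc_mult_mat[OF c(3) iT eT] by simp
  also have "\<dots> = (Ps * Ps) * F" using transpose_inv[OF c(1) c(2) ie] f1 assoc_mult_mat[OF c(3) c(3) c(5)] c by simp
  also have "\<dots> = transpose_mat r * r * F - F" unfolding sq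
    by (subst minus_mult_distrib_mat[of _ m m]) (use c rT in auto)
  also have "transpose_mat r * r * F = 0\<^sub>m m 1"
    using assoc_mult_mat[OF rT c(4) c(5)] rF c rT by simp
  finally have "Ps * transpose_mat epsi * (transpose_mat eps * Ps * F) = - F" using c zero_minus_mat'[OF c(5)] by simp
  then show ?thesis using f1 c eT mult_carrier_mat[OF eT c(3)] mult_carrier_mat[OF mult_carrier_mat[OF eT c(3)] c(5)] by simp
qed

definition rowm :: "'a::comm_ring_1 vec \<Rightarrow> 'a mat" where "rowm v = mat 1 (dim_vec v) (\<lambda>(_,j). v $ j)"
definition colm :: "'a::comm_ring_1 vec \<Rightarrow> 'a mat" where "colm v = mat (dim_vec v) 1 (\<lambda>(i,_). v $ i)"

lemma rowm_carrier: "v \<in> carrier_vec m \<Longrightarrow> rowm v \<in> carrier_mat 1 m" unfolding rowm_def by auto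
lemma colm_carrier: "v \<in> carrier_vec m \<Longrightarrow> colm v \<in> carrier_mat m 1" unfolding colm_def by auto

lemma rowm_carrier'[simp]: "v \<in> carrier_vec m \<Longrightarrow> rowm v \<in> carrier_mat (Suc 0) m" unfolding rowm_def by auto
lemma colm_carrier'[simp]: "v \<in> carrier_vec m \<Longrightarrow> colm v \<in> carrier_mat m (Suc 0)" unfolding colm_def by auto

lemma rowm_vec: "B \<in> carrier_mat 1 m \<Longrightarrow> rowm (vec m (\<lambda>k. B $$ (0,k))) = B"
  unfolding rowm_def by (rule eq_matI) auto
lemma colm_vec: "B \<in> carrier_mat m 1 \<Longrightarrow> colm (vec m (\<lambda>k. B $$ (k,0))) = B"
  unfolding colm_def by (rule eq_matI) auto

lemma outer_rc:
  assumes B: "B \<in> carrier_mat 1 m" and v: "v \<in> carrier_vec m"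
  shows "outer (vec m (\<lambda>j. - B $$ (0,j))) v = - (transpose_mat B * rowm v)"
proof (rule eq_matI)
  fix i j assume ij: "i < dim_row (- (transpose_mat B * rowm v))" "j < dim_col (- (transpose_mat B * rowm v))"
  then have ij: "i < m" "j < m" using B v by (auto simp: rowm_def)
  have "(transpose_mat B * rowm v) $$ (i,j) = (\<Sum>t<1. transpose_mat B $$ (i,t) * rowm v $$ (t,j))"
    by (rule mult_index_sum) (use B v ij in \<open>auto simp: rowm_carrier\<close>)
  then show "outer (vec m (\<lambda>j. - B $$ (0,j))) v $$ (i,j) = (- (transpose_mat B * rowm v)) $$ (i,j)"
    using ij B v by (auto simp: outer_def rowm_def)
qed (use B v in \<open>auto simp: outer_def rowm_def\<close>)

lemma outer_cr:
  assumes C: "C \<in> carrier_mat 1 m" and v: "v \<in> carrier_vec m"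
  shows "outer v (vec m (\<lambda>j. - C $$ (0,j))) = - (colm v * C)"
proof (rule eq_matI)
  fix i j assume ij: "i < dim_row (- (colm v * C))" "j < dim_col (- (colm v * C))"
  then have ij: "i < m" "j < m" using C v by (auto simp: colm_def)
  have "(colm v * C) $$ (i,j) = (\<Sum>t<1. colm v $$ (i,t) * C $$ (t,j))"
    by (rule mult_index_sum) (use C v ij in \<open>auto simp: colm_carrier\<close>)
  then show "outer v (vec m (\<lambda>j. - C $$ (0,j))) $$ (i,j) = (- (colm v * C)) $$ (i,j)"
    using ij C v by (auto simp: outer_def colm_def)
qed (use C v in \<open>auto simp: outer_def colm_def\<close>)

lemma mat_inverse_eq:
  assumes A: "A \<in> carrier_mat N N" and B: "B \<in> carrier_mat N N" and AB: "A * B = 1\<^sub>m N" and BA: "B * A = 1\<^sub>m N"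
  shows "mat_inverse A = B"
proof -
  have dA: "dim_row A = N" using A by auto
  have "\<exists>C. C \<in> carrier_mat (dim_row A) (dim_row A) \<and> A * C = 1\<^sub>m (dim_row A) \<and> C * A = 1\<^sub>m (dim_row A)"
    using B AB BA dA by auto
  then have C: "mat_inverse A \<in> carrier_mat N N" "A * mat_inverse A = 1\<^sub>m N" "mat_inverse A * A = 1\<^sub>m N"
    unfolding mat_inverse_def dA by (metis (mono_tags, lifting) someI_ex)+
  have "mat_inverse A = mat_inverse A * (A * B)" using AB C by simp
  also have "\<dots> = (mat_inverse A * A) * B" using assoc_mult_mat[OF C(1) A B] by simp
  also have "\<dots> = B" using C B by simp
  finally show ?thesis .
qed

lemma w00:
  assumes W: "W \<in> carrier_mat 1 m" and m: "m > 0" and Wr: "W * transpose_mat (rr m) = 0\<^sub>m 1 1"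
  shows "W $$ (0,0) = 0"
proof -
  have "(W * transpose_mat (rr m)) $$ (0,0) = (\<Sum>t<m. W $$ (0,t) * transpose_mat (rr m) $$ (t,0))"
    by (rule mult_index_sum) (use W in auto)
  also have "\<dots> = (\<Sum>t<m. W $$ (0,t) * (if t = 0 then 1 else 0))"
    by (rule sum.cong) (auto simp: rr_def)
  also have "\<dots> = W $$ (0,0)" using m by (simp add: sum_delta_right)
  finally show ?thesis using Wr by simp
qed

lemma u00:
  assumes U: "U \<in> carrier_mat m 1" and m: "m > 0" and rU: "rr m * U = 0\<^sub>m 1 1"
  shows "U $$ (0,0) = 0"
proof -
  have "(rr m * U) $$ (0,0) = (\<Sum>t<m. rr m $$ (0,t) * U $$ (t,0))"
    by (rule mult_index_sum) (use U in auto)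
  also have "\<dots> = (\<Sum>t<m. (if t = 0 then 1 else 0) * U $$ (t,0))"
    by (rule sum.cong) (auto simp: rr_def)
  also have "\<dots> = U $$ (0,0)" using m by (simp add: sum_delta_left)
  finally show ?thesis using rU by simp
qed

definition Ejl :: "nat \<Rightarrow> nat \<Rightarrow> 'a::comm_ring_1 \<Rightarrow> 'a mat" where
  "Ejl m j l = mat 1 m (\<lambda>(_,k). if k = j then l else 0)"
definition Fil :: "nat \<Rightarrow> nat \<Rightarrow> 'a::comm_ring_1 \<Rightarrow> 'a mat" where
  "Fil m i l = mat m 1 (\<lambda>(k,_). if k = i then l else 0)"

lemma Ejl_carrier: "Ejl m j l \<in> carrier_mat 1 m" unfolding Ejl_def by auto
lemma Fil_carrier: "Fil m i l \<in> carrier_mat m 1" unfolding Fil_def by auto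

lemma Ejl_carrier'[simp]: "Ejl m j l \<in> carrier_mat (Suc 0) m" unfolding Ejl_def by auto
lemma Fil_carrier'[simp]: "Fil m i l \<in> carrier_mat m (Suc 0)" unfolding Fil_def by auto

lemma Ejl_r: "0 < j \<Longrightarrow> Ejl m j l * transpose_mat (rr m) = 0\<^sub>m 1 1"
  by (rule eq_matI) (auto simp: Ejl_def rr_def scalar_prod_def intro!: sum.neutral)
lemma r_Fil: "0 < i \<Longrightarrow> rr m * Fil m i l = 0\<^sub>m 1 1"
  by (rule eq_matI) (auto simp: Fil_def rr_def scalar_prod_def intro!: sum.neutral)

lemma elem_row: assumes "0 < j" "j < m" shows "elem_mat m 0 j l = 1\<^sub>m m + transpose_mat (rr m) * Ejl m j l"
proof (rule eq_matI)
  fix a b assume ab: "a < dim_row (1\<^sub>m m + transpose_mat (rr m) * Ejl m j l)" "b < dim_col (1\<^sub>m m + transpose_mat (rr m) * Ejl m j l)"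
  then have ab: "a < m" "b < m" by (auto simp: Ejl_def)
  have "(transpose_mat (rr m) * Ejl m j l) $$ (a,b) = (\<Sum>t<1. transpose_mat (rr m) $$ (a,t) * Ejl m j l $$ (t,b))"
    by (rule mult_index_sum) (use ab in \<open>auto simp: Ejl_carrier\<close>)
  then show "elem_mat m 0 j l $$ (a,b) = (1\<^sub>m m + transpose_mat (rr m) * Ejl m j l) $$ (a,b)"
    using ab assms by (subst index_add_mat) (auto simp: elem_index rr_def Ejl_def)
qed (auto simp: Ejl_def)

lemma elem_col: assumes "0 < i" "i < m" shows "elem_mat m i 0 l = 1\<^sub>m m + Fil m i l * rr m"
proof (rule eq_matI)
  fix a b assume ab: "a < dim_row (1\<^sub>m m + Fil m i l * rr m)" "b < dim_col (1\<^sub>m m + Fil m i l * rr m)"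
  then have ab: "a < m" "b < m" by (auto simp: Fil_def)
  have "(Fil m i l * rr m) $$ (a,b) = (\<Sum>t<1. Fil m i l $$ (a,t) * rr m $$ (t,b))"
    by (rule mult_index_sum) (use ab in \<open>auto simp: Fil_carrier\<close>)
  then show "elem_mat m i 0 l $$ (a,b) = (1\<^sub>m m + Fil m i l * rr m) $$ (a,b)"
    using ab assms by (subst index_add_mat) (auto simp: elem_index rr_def Fil_def)
qed (auto simp: Fil_def)

lemma commutator:
  assumes "0 < i" "i < m" "0 < j" "j < m" "i \<noteq> j"
  shows "elem_mat m i j l = elem_mat m i 0 l * elem_mat m 0 j 1 * elem_mat m i 0 (-l) * elem_mat m 0 j (-1)"
proof (rule eq_matI)
  fix a b assume "a < dim_row (elem_mat m i 0 l * elem_mat m 0 j 1 * elem_mat m i 0 (-l) * elem_mat m 0 j (-1))"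
    "b < dim_col (elem_mat m i 0 l * elem_mat m 0 j 1 * elem_mat m i 0 (-l) * elem_mat m 0 j (-1))"
  then have ab: "a < m" "b < m" by auto
  have c1: "elem_mat m i 0 l * elem_mat m 0 j 1 \<in> carrier_mat m m" by (metis mult_carrier_mat elem_carrier)
  have c2: "elem_mat m i 0 l * elem_mat m 0 j 1 * elem_mat m i 0 (-l) \<in> carrier_mat m m" using c1 by (metis mult_carrier_mat elem_carrier)
  show "elem_mat m i j l $$ (a,b) = (elem_mat m i 0 l * elem_mat m 0 j 1 * elem_mat m i 0 (-l) * elem_mat m 0 j (-1)) $$ (a,b)"
  proof -
    let ?M1 = "elem_mat m i 0 l * elem_mat m 0 j 1"
    let ?M2 = "?M1 * elem_mat m i 0 (-l)"
    have h1: "?M1 $$ (x,y) = elem_mat m i 0 l $$ (x,y) + (if y = j then elem_mat m i 0 l $$ (x,0) else 0)"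
      if "x < m" "y < m" for x y using that assms by (simp add: mult_elem_right del: index_mult_mat)
    have h2: "?M2 $$ (x,y) = ?M1 $$ (x,y) + (if y = 0 then ?M1 $$ (x,i) * (-l) else 0)"
      if "x < m" "y < m" for x y using that assms by (simp add: mult_elem_right[OF c1] del: index_mult_mat)
    have h3: "(?M2 * elem_mat m 0 j (-1)) $$ (a,b) = ?M2 $$ (a,b) + (if b = j then ?M2 $$ (a,0) * (-1) else 0)"
      using ab assms by (simp add: mult_elem_right[OF c2] del: index_mult_mat)
    show ?thesis unfolding h3 using ab assms by (simp add: h1 h2 elem_index del: index_mult_mat)
  qed
qed auto

lemma core:
  fixes eps epsi Ps phi Phi :: "'a::comm_ring_1 mat"
  assumes m: "m > 0"
    and c: "eps \<in> carrier_mat m m" "epsi \<in> carrier_mat m m" "Ps \<in> carrier_mat m m"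
    and ie: "eps * epsi = 1\<^sub>m m" "epsi * eps = 1\<^sub>m m"
    and eE: "eps \<in> E_group m" "epsi \<in> E_group m"
    and rP: "rr m * Ps = 0\<^sub>m 1 m" and Pr: "Ps * transpose_mat (rr m) = 0\<^sub>m m 1"
    and sq: "Ps * Ps = transpose_mat (rr m) * rr m - 1\<^sub>m m"
    and phi: "phi = four_block_mat (0\<^sub>m 1 1) (rr m * eps) (- (transpose_mat eps * transpose_mat (rr m))) (transpose_mat eps * Ps * eps)"
    and Phi: "Phi = - four_block_mat (0\<^sub>m 1 1) (rr m * transpose_mat epsi) (- (epsi * transpose_mat (rr m))) (epsi * Ps * transpose_mat epsi)"
    and inv: "phi * Phi = 1\<^sub>m (1+m)" "Phi * phi = 1\<^sub>m (1+m)"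
  shows "E_phi phi = E_group m"
proof -
  have r: "rr m \<in> carrier_mat 1 m" by simp
  have rT: "transpose_mat (rr m) \<in> carrier_mat m 1" by simp
  have eT: "transpose_mat eps \<in> carrier_mat m m" and iT: "transpose_mat epsi \<in> carrier_mat m m" using c by auto
  have D1: "transpose_mat eps * Ps * eps \<in> carrier_mat m m" using c eT by (metis mult_carrier_mat)
  have D2: "epsi * Ps * transpose_mat epsi \<in> carrier_mat m m" using c iT by (metis mult_carrier_mat)
  have B1: "rr m * eps \<in> carrier_mat 1 m" using c r by (metis mult_carrier_mat)
  have B2: "rr m * transpose_mat epsi \<in> carrier_mat 1 m" using iT r by (metis mult_carrier_mat)
  have phiC: "phi \<in> carrier_mat (1+m) (1+m)" unfolding phi using D1 by (intro four_block_carrier_mat) auto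
  have PhiC: "Phi \<in> carrier_mat (1+m) (1+m)" unfolding Phi uminus_carrier_iff_mat using D2 by (intro four_block_carrier_mat) auto
  have dphi: "dim_row phi - 1 = m" using phiC by simp
  have minv: "mat_inverse phi = Phi" by (rule mat_inverse_eq[OF phiC PhiC inv])
  have nu: "phi_nu phi = transpose_mat eps * Ps * eps"
    unfolding phi_nu_def dphi by (rule eq_matI) (use D1 B1 in \<open>auto simp: phi\<close>)
  have cc: "phi_c phi = vec m (\<lambda>j. - (rr m * eps) $$ (0,j))"
    unfolding phi_c_def dphi by (rule eq_vecI) (use D1 B1 in \<open>auto simp: phi\<close>)
  have dd: "phi_d phi = vec m (\<lambda>j. - (rr m * transpose_mat epsi) $$ (0,j))"
    unfolding phi_d_def dphi minv by (rule eq_vecI) (use D2 B2 in \<open>auto simp: Phi\<close>)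
  have mu: "phi_mu phi = - (epsi * Ps * transpose_mat epsi)"
    unfolding phi_mu_def dphi minv by (rule eq_matI) (use D2 B2 in \<open>auto simp: Phi\<close>)
  have tr: "transpose_mat (rr m * transpose_mat epsi) = epsi * transpose_mat (rr m)"
    using transpose_mult[OF r iT] by simp
  have alpha_eq: "alpha phi v = epsi * (1\<^sub>m m + transpose_mat (rr m) * (- (rowm v * transpose_mat eps * Ps))) * eps"
    if v: "v \<in> carrier_vec m" for v
  proof -
    have "alpha phi v = 1\<^sub>m m + (- (epsi * transpose_mat (rr m) * rowm v)) * (transpose_mat eps * Ps * eps)"
      unfolding alpha_def dphi nu dd outer_rc[OF B2 v] tr ..
    also have "\<dots> = epsi * (1\<^sub>m m + transpose_mat (rr m) * (- (rowm v * transpose_mat eps * Ps))) * eps"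
      by (rule alg_alpha[OF c(2) c(1) c(3) r rowm_carrier[OF v] ie(2)])
    finally show ?thesis .
  qed
  have beta_eq: "beta phi v = epsi * (1\<^sub>m m + (Ps * transpose_mat epsi * colm v) * rr m) * eps"
    if v: "v \<in> carrier_vec m" for v
  proof -
    have "beta phi v = 1\<^sub>m m + (- (epsi * Ps * transpose_mat epsi)) * (- (colm v * (rr m * eps)))"
      unfolding beta_def dphi mu cc outer_cr[OF B1 v] ..
    also have "\<dots> = epsi * (1\<^sub>m m + (Ps * transpose_mat epsi * colm v) * rr m) * eps"
      by (rule alg_beta[OF c(2) c(1) c(3) r colm_carrier[OF v] ie(2)])
    finally show ?thesis .
  qed
  have Sel: "{elem_mat m i j l | i j l. i < m \<and> j < m \<and> i \<noteq> j} \<subseteq> carrier_mat m m" by auto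
  have alpha_in: "alpha phi v \<in> E_group m" if v: "v \<in> carrier_vec m" for v
  proof -
    let ?W = "- (rowm v * transpose_mat eps * Ps)"
    have V: "rowm v \<in> carrier_mat 1 m" by (rule rowm_carrier[OF v])
    have VeT: "rowm v * transpose_mat eps \<in> carrier_mat 1 m" using V eT by (metis mult_carrier_mat)
    have W: "?W \<in> carrier_mat 1 m" using VeT c(3) by (metis mult_carrier_mat uminus_carrier_iff_mat)
    have "?W * transpose_mat (rr m) = - (rowm v * transpose_mat eps * (Ps * transpose_mat (rr m)))"
      using assoc_mult_mat[OF VeT c(3) rT] VeT c(3) rT by (metis mult_carrier_mat uminus_mult_left_mat carrier_matD(1,2))
    also have "\<dots> = 0\<^sub>m 1 1" unfolding Pr right_mult_zero_mat[OF VeT] by simp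
    finally have "?W * transpose_mat (rr m) = 0\<^sub>m 1 1" .
    then have "?W $$ (0,0) = 0" by (rule w00[OF W m])
    then have X: "1\<^sub>m m + transpose_mat (rr m) * ?W \<in> E_group m" by (rule rowop_E[OF W])
    show ?thesis unfolding alpha_eq[OF v] by (intro E_mult eE X)
  qed
  have beta_in: "beta phi v \<in> E_group m" if v: "v \<in> carrier_vec m" for v
  proof -
    let ?U = "Ps * transpose_mat epsi * colm v"
    have Cv: "colm v \<in> carrier_mat m 1" by (rule colm_carrier[OF v])
    have PiT: "Ps * transpose_mat epsi \<in> carrier_mat m m" using c iT by (metis mult_carrier_mat)
    have U: "?U \<in> carrier_mat m 1" using PiT Cv by (metis mult_carrier_mat)
    have "rr m * ?U = rr m * Ps * transpose_mat epsi * colm v"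
      using assoc_mult_mat[OF r c(3) iT] assoc_mult_mat[OF r PiT Cv] by simp
    also have "\<dots> = 0\<^sub>m 1 1" unfolding rP using iT Cv by simp
    finally have "rr m * ?U = 0\<^sub>m 1 1" .
    then have "?U $$ (0,0) = 0" by (rule u00[OF U m])
    then have X: "1\<^sub>m m + ?U * rr m \<in> E_group m" by (rule colop_E[OF U])
    show ?thesis unfolding beta_eq[OF v] by (intro E_mult eE X)
  qed
  have row_gen: "\<exists>v \<in> carrier_vec m. alpha phi v = epsi * elem_mat m 0 j l * eps" if j: "0 < j" "j < m" for j l
  proof -
    let ?V = "Ejl m j l * Ps * transpose_mat epsi"
    have V: "?V \<in> carrier_mat 1 m" using Ejl_carrier c iT by (metis mult_carrier_mat)
    define v where "v = vec m (\<lambda>k. ?V $$ (0,k))"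
    have v: "v \<in> carrier_vec m" unfolding v_def by simp
    have rv: "rowm v = ?V" unfolding v_def by (rule rowm_vec[OF V])
    have "alpha phi v = epsi * (1\<^sub>m m + transpose_mat (rr m) * Ejl m j l) * eps"
      unfolding alpha_eq[OF v] rv alg_W[OF c(2) c(1) c(3) r Ejl_carrier ie(1) Ejl_r[OF j(1)] sq] ..
    then show ?thesis using v unfolding elem_row[OF j, of l] by blast
  qed
  have col_gen: "\<exists>v \<in> carrier_vec m. beta phi v = epsi * elem_mat m i 0 l * eps" if i: "0 < i" "i < m" for i l
  proof -
    let ?V = "- (transpose_mat eps * Ps * Fil m i l)"
    have V: "?V \<in> carrier_mat m 1" using Fil_carrier c eT by (metis mult_carrier_mat uminus_carrier_iff_mat)
    define v where "v = vec m (\<lambda>k. ?V $$ (k,0))"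
    have v: "v \<in> carrier_vec m" unfolding v_def by simp
    have cv: "colm v = ?V" unfolding v_def by (rule colm_vec[OF V])
    have "beta phi v = epsi * (1\<^sub>m m + Fil m i l * rr m) * eps"
      unfolding beta_eq[OF v] cv alg_U[OF c(2) c(1) c(3) r Fil_carrier ie(1) r_Fil[OF i(1)] sq] ..
    then show ?thesis using v unfolding elem_col[OF i, of l] by blast
  qed
  let ?Sphi = "{alpha phi v | v. v \<in> carrier_vec m} \<union> {beta phi v | v. v \<in> carrier_vec m}"
  have Ephi: "E_phi phi = gen_subgroup m ?Sphi" unfolding E_phi_def dphi ..
  let ?S0 = "{elem_mat m 0 j (l::'a) | j l. 0 < j \<and> j < m} \<union> {elem_mat m i 0 (l::'a) | i l. 0 < i \<and> i < m}"
  have sub1: "E_phi phi \<subseteq> E_group m"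
  proof
    fix A assume "A \<in> E_phi phi"
    then have A: "A \<in> gen_subgroup m ?Sphi" unfolding Ephi .
    have "?Sphi \<subseteq> gen_subgroup m {elem_mat m i j l | i j l. i < m \<and> j < m \<and> i \<noteq> j}"
    proof
      fix X :: "'a mat" assume "X \<in> ?Sphi"
      then show "X \<in> gen_subgroup m {elem_mat m i j l | i j l. i < m \<and> j < m \<and> i \<noteq> j}"
        using alpha_in beta_in unfolding E_group_def by auto
    qed
    from gen_mono[OF this A] show "A \<in> E_group m" unfolding E_group_def .
  qed
  have S0c: "?S0 \<subseteq> carrier_mat m m" by auto
  have conj0: "epsi * Y * eps \<in> E_phi phi" if Y: "Y \<in> gen_subgroup m ?S0" for Y
    unfolding Ephi
  proof (rule gen_conj[OF c(1) c(2) ie(2) ie(1) S0c _ Y])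
    fix X :: "'a mat" assume "X \<in> ?S0"
    then show "epsi * X * eps \<in> gen_subgroup m ?Sphi"
    proof
      assume "X \<in> {elem_mat m 0 j l | j l. 0 < j \<and> j < m}"
      then obtain j l where X: "X = elem_mat m 0 j l" "0 < j" "j < m" by auto
      from row_gen[OF X(2,3)] obtain v where v: "v \<in> carrier_vec m" and eq: "alpha phi v = epsi * elem_mat m 0 j l * eps" by auto
      have "epsi * elem_mat m 0 j l * eps \<in> ?Sphi" by (intro UnI1 CollectI exI[of _ v] conjI) (simp_all add: eq v)
      then show ?thesis unfolding X(1) by (rule gen_subgroup.gen_gen)
    next
      assume "X \<in> {elem_mat m i 0 l | i l. 0 < i \<and> i < m}"
      then obtain i l where X: "X = elem_mat m i 0 l" "0 < i" "i < m" by auto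
      from col_gen[OF X(2,3)] obtain v where v: "v \<in> carrier_vec m" and eq: "beta phi v = epsi * elem_mat m i 0 l * eps" by auto
      have "epsi * elem_mat m i 0 l * eps \<in> ?Sphi" by (intro UnI2 CollectI exI[of _ v] conjI) (simp_all add: eq v)
      then show ?thesis unfolding X(1) by (rule gen_subgroup.gen_gen)
    qed
  qed
  have gens0: "{elem_mat m i j (l::'a) | i j l. i < m \<and> j < m \<and> i \<noteq> j} \<subseteq> gen_subgroup m ?S0"
  proof
    fix X :: "'a mat" assume "X \<in> {elem_mat m i j l | i j l. i < m \<and> j < m \<and> i \<noteq> j}"
    then obtain i j l where X: "X = elem_mat m i j l" "i < m" "j < m" "i \<noteq> j" by auto
    show "X \<in> gen_subgroup m ?S0"
    proof (cases "i = 0")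
      case True
      then show ?thesis using X by (intro gen_subgroup.gen_gen) auto
    next
      case i0: False
      show ?thesis
      proof (cases "j = 0")
        case True
        then show ?thesis using X i0 by (intro gen_subgroup.gen_gen) auto
      next
        case j0: False
        have g: "elem_mat m i 0 l' \<in> gen_subgroup m ?S0" "elem_mat m 0 j l' \<in> gen_subgroup m ?S0" for l'
          using X i0 j0 by (auto intro!: gen_subgroup.gen_gen)
        have "X = elem_mat m i 0 l * elem_mat m 0 j 1 * elem_mat m i 0 (-l) * elem_mat m 0 j (-1)"
          unfolding X(1) by (rule commutator) (use X i0 j0 in auto)
        moreover have "elem_mat m i 0 l * elem_mat m 0 j 1 * elem_mat m i 0 (-l) * elem_mat m 0 j (-1) \<in> gen_subgroup m ?S0"
          by (intro gen_subgroup.gen_mult g)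
        ultimately show ?thesis by simp
      qed
    qed
  qed
  have sub2: "E_group m \<subseteq> E_phi phi"
  proof
    fix A :: "'a mat" assume A: "A \<in> E_group m"
    have Ac: "A \<in> carrier_mat m m" by (rule E_carrier[OF A])
    have Y: "eps * A * epsi \<in> E_group m" by (intro E_mult eE A)
    then have "eps * A * epsi \<in> gen_subgroup m ?S0" unfolding E_group_def by (rule gen_mono[OF gens0])
    from conj0[OF this] have "epsi * (eps * A * epsi) * eps \<in> E_phi phi" .
    moreover have "epsi * (eps * A * epsi) * eps = A"
    proof -
      have eA: "eps * A \<in> carrier_mat m m" using c Ac by (metis mult_carrier_mat)
      have eAe: "eps * A * epsi \<in> carrier_mat m m" using eA c by (metis mult_carrier_mat)
      have "epsi * (eps * A * epsi) * eps = epsi * (eps * A * epsi * eps)" by (rule assoc_mult_mat[OF c(2) eAe c(1)])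
      also have "eps * A * epsi * eps = eps * A * (epsi * eps)" by (rule assoc_mult_mat[OF eA c(2) c(1)])
      also have "\<dots> = eps * A" using ie right_mult_one_mat[OF eA] by simp
      also have "epsi * (eps * A) = epsi * eps * A" by (rule assoc_mult_mat[OF c(2) c(1) Ac, symmetric])
      finally show ?thesis using ie Ac by simp
    qed
    ultimately show "A \<in> E_phi phi" by simp
  qed
  show ?thesis using sub1 sub2 by blast
qed

lemma psi_index: "i < 2*n \<Longrightarrow> j < 2*n \<Longrightarrow>
  psi n $$ (i,j) = (if even i \<and> j = i + 1 then 1 else if odd i \<and> i = j + 1 then -1 else (0::'a::comm_ring_1))"
  unfolding psi_def by auto

lemma even_succ_lt: "even (a::nat) \<Longrightarrow> a < 2*n \<Longrightarrow> a + 1 < 2*n"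
  by (elim evenE) presburger

lemma psi_sum_left:
  assumes a: "a < 2*n"
  shows "(\<Sum>t<2*n. psi n $$ (a,t) * X t) = (if even a then X (a+1) else - X (a-1))"
proof (cases "even a")
  case True
  have "(\<Sum>t<2*n. psi n $$ (a,t) * X t) = (\<Sum>t<2*n. if t = a+1 then X t else 0)"
    by (rule sum.cong) (use a True in \<open>auto simp: psi_index\<close>)
  then show ?thesis using True even_succ_lt[OF True a] by (simp add: sum.delta')
next
  case False
  have "(\<Sum>t<2*n. psi n $$ (a,t) * X t) = (\<Sum>t<2*n. if t = a-1 then - X t else 0)"
    by (rule sum.cong) (use a False in \<open>auto simp: psi_index\<close>)
  then show ?thesis using False a by (simp add: sum.delta')
qed

lemma psi_sq: "psi n * psi n = - (1\<^sub>m (2*n) :: 'a::comm_ring_1 mat)"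
proof (rule eq_matI)
  fix i j assume "i < dim_row (- (1\<^sub>m (2*n) :: 'a mat))" "j < dim_col (- (1\<^sub>m (2*n) :: 'a mat))"
  then have ij: "i < 2*n" "j < 2*n" by auto
  have "(psi n * psi n) $$ (i,j) = (\<Sum>t<2*n. psi n $$ (i,t) * psi n $$ (t,j))"
    by (rule mult_index_sum) (use ij in auto)
  also have "\<dots> = (if even i then psi n $$ (i+1,j) else - psi n $$ (i-1,j))"
    by (rule psi_sum_left[OF ij(1)])
  also have "\<dots> = (- (1\<^sub>m (2*n) :: 'a mat)) $$ (i,j)"
    using ij even_succ_lt[of i n] by (auto simp: psi_index)
  finally show "(psi n * psi n) $$ (i,j) = (- (1\<^sub>m (2*n) :: 'a mat)) $$ (i,j)" .
qed auto

lemma sandwich: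
  fixes T P TQ Q Y :: "'a::comm_ring_1 mat"
  assumes c: "T \<in> carrier_mat N N" "P \<in> carrier_mat N N" "TQ \<in> carrier_mat N N" "Q \<in> carrier_mat N N" "Y \<in> carrier_mat N N"
    and PT: "P * TQ = 1\<^sub>m N" and YY: "Y * Y = - 1\<^sub>m N" and TQ: "T * Q = 1\<^sub>m N"
  shows "(T * Y * P) * (TQ * Y * Q) = - 1\<^sub>m N"
proof -
  have f: "T * Y \<in> carrier_mat N N" "T * Y * P \<in> carrier_mat N N" "TQ * Y \<in> carrier_mat N N" "Y * Q \<in> carrier_mat N N"
    using c by (metis mult_carrier_mat)+
  have "(T * Y * P) * (TQ * Y * Q) = (T * Y) * (P * (TQ * (Y * Q)))"
    using assoc_mult_mat[OF f(1) c(2) mult_carrier_mat[OF c(3) f(4)]] assoc_mult_mat[OF c(3) c(5) c(4)] by simp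
  also have "P * (TQ * (Y * Q)) = Y * Q" using assoc_mult_mat[OF c(2) c(3) f(4), symmetric] PT left_mult_one_mat[OF f(4)] by simp
  also have "(T * Y) * (Y * Q) = T * (Y * Y) * Q"
    using assoc_mult_mat[OF c(1) c(5) f(4)] assoc_mult_mat[OF c(5) c(5) c(4), symmetric]
      assoc_mult_mat[OF c(1) mult_carrier_mat[OF c(5) c(5)] c(4)] by simp
  also have "\<dots> = - (T * Q)" unfolding YY using c by simp
  finally show ?thesis using TQ by simp
qed

theorem lemma3p11:
  fixes n :: nat and eps phi :: "'a::comm_ring_1 mat"
  assumes "n \<ge> 1"
    and "eps \<in> E_group (2*n - 1)"
    and "phi = transpose_mat (one_perp eps) * psi n * one_perp eps"
  shows "E_phi phi = E_group (2*n - 1)"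
proof -
  note n = assms(1)
  have e: "eps \<in> carrier_mat (2*n-1) (2*n-1)" by (rule E_carrier[OF assms(2)])
  obtain epsi where eiE: "epsi \<in> E_group (2*n-1)" and ie: "eps * epsi = 1\<^sub>m (2*n-1)" "epsi * eps = 1\<^sub>m (2*n-1)"
    using E_inverse[OF assms(2)] by blast
  have ei: "epsi \<in> carrier_mat (2*n-1) (2*n-1)" by (rule E_carrier[OF eiE])
  have eT: "transpose_mat eps \<in> carrier_mat (2*n-1) (2*n-1)" and eiT: "transpose_mat epsi \<in> carrier_mat (2*n-1) (2*n-1)"
    using e ei by auto
  have N: "1 + (2*n-1) = 2*n" using n by simp
  have cP: "one_perp eps \<in> carrier_mat (2*n) (2*n)" using op_carrier[OF e] unfolding N .
  have cT: "one_perp (transpose_mat eps) \<in> carrier_mat (2*n) (2*n)" using op_carrier[OF eT] unfolding N .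
  have cQ: "one_perp (transpose_mat epsi) \<in> carrier_mat (2*n) (2*n)" using op_carrier[OF eiT] unfolding N .
  have cTQ: "one_perp epsi \<in> carrier_mat (2*n) (2*n)" using op_carrier[OF ei] unfolding N .
  have cpsi: "psi n \<in> carrier_mat (2*n) (2*n)" by simp
  have tT: "transpose_mat (one_perp eps) = one_perp (transpose_mat eps)" by (rule op_transpose[OF e])
  have tQ: "transpose_mat (one_perp (transpose_mat epsi)) = one_perp epsi"
    using op_transpose[OF eiT] by simp
  have PT: "one_perp eps * one_perp epsi = 1\<^sub>m (2*n)"
    using op_mult[OF e ei] ie(1) op_one[of "2*n-1"] N by simp
  have TQP: "one_perp epsi * one_perp eps = 1\<^sub>m (2*n)"
    using op_mult[OF ei e] ie(2) op_one[of "2*n-1"] N by simp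
  have TQ: "one_perp (transpose_mat eps) * one_perp (transpose_mat epsi) = 1\<^sub>m (2*n)"
    using op_mult[OF eT eiT] transpose_inv[OF e ei ie(2)] op_one[of "2*n-1"] N by simp
  have QT: "one_perp (transpose_mat epsi) * one_perp (transpose_mat eps) = 1\<^sub>m (2*n)"
    using op_mult[OF eiT eT] transpose_inv[OF ei e ie(1)] op_one[of "2*n-1"] N by simp
  define Phi where "Phi = - (transpose_mat (one_perp (transpose_mat epsi)) * psi n * one_perp (transpose_mat epsi))"
  have phi': "phi = one_perp (transpose_mat eps) * psi n * one_perp eps" unfolding assms(3) tT ..
  have Phi': "Phi = - (one_perp epsi * psi n * one_perp (transpose_mat epsi))" unfolding Phi_def tQ ..
  have A: "one_perp (transpose_mat eps) * psi n * one_perp eps \<in> carrier_mat (2*n) (2*n)"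
    using cT cpsi cP by (metis mult_carrier_mat)
  have B: "one_perp epsi * psi n * one_perp (transpose_mat epsi) \<in> carrier_mat (2*n) (2*n)"
    using cTQ cpsi cQ by (metis mult_carrier_mat)
  have s1: "(one_perp (transpose_mat eps) * psi n * one_perp eps) * (one_perp epsi * psi n * one_perp (transpose_mat epsi)) = - 1\<^sub>m (2*n)"
    by (rule sandwich[OF cT cP cTQ cQ cpsi PT psi_sq TQ])
  have s2: "(one_perp epsi * psi n * one_perp (transpose_mat epsi)) * (one_perp (transpose_mat eps) * psi n * one_perp eps) = - 1\<^sub>m (2*n)"
    by (rule sandwich[OF cTQ cQ cT cP cpsi QT psi_sq TQP])
  have inv1: "phi * Phi = 1\<^sub>m (1 + (2*n-1))"
    unfolding phi' Phi' N
    by (subst uminus_mult_right_mat) (use A B s1 cP cTQ in auto)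
  have inv2: "Phi * phi = 1\<^sub>m (1 + (2*n-1))"
    unfolding phi' Phi' N
    by (subst uminus_mult_left_mat) (use A B s2 cQ cT in auto)
  have phiB: "phi = four_block_mat (0\<^sub>m 1 1) (rr (2*n-1) * eps) (- (transpose_mat eps * transpose_mat (rr (2*n-1))))
        (transpose_mat eps * psip n * eps)"
    unfolding assms(3) by (rule phi_block[OF n e])
  have PhiB: "Phi = - four_block_mat (0\<^sub>m 1 1) (rr (2*n-1) * transpose_mat epsi) (- (epsi * transpose_mat (rr (2*n-1))))
        (epsi * psip n * transpose_mat epsi)"
    unfolding Phi_def phi_block[OF n eiT] by simp
  have m: "2*n-1 > 0" using n by simp
  show ?thesis
    by (rule core[OF m e ei psip_carrier ie assms(2) eiE rr_psip[OF n] psip_rrT[OF n] psip_sq[OF n] phiB PhiB inv1 inv2])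
qed

end
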